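(* Let $n\ge2$ and let $k$ be a positive integer with $k\le n-1$. For $\delta_1,\dots,\delta_{n-2}\in\{\mathsf A,\mathsf D\}$, consider $\delta=(\delta_1,\dots,\delta_{n-2},\mathsf A,\mathsf D)$ and $\delta'=(\delta_1,\dots,\delta_{n-2},\mathsf D,\mathsf A)$ in $\{\mathsf A,\mathsf D\}^n$. Then $$\mathbf{i}_\delta(\underbrace{0,\dots,0}_{n-1},k)\sim\mathbf{i}_{\delta'}(\underbrace{0,\dots,0}_{n-1},n-k-1).$$
   Context: $\mathfrak{S}_{m+1}$ is generated by $s_i=(i,i+1)$; $R(w_0^{(m+1)})$ is the set of reduced words $(i_1,\dots,i_{\bar m})\in[m]^{\bar m}$, $\bar m=m(m+1)/2$, of its longest element, with $R(w_0^{(1)})=\{\emptyset\}$. A 2-move exchanges two consecutive letters $i,j$ with $|i-j|>1$; $\mathbf{i}\sim\mathbf{i}'$ means the words are related by a sequence of 2-moves. For a word $\mathbf j$, $\mathbf j+1$ adds 1 to each letter. Extensions: for $\mathbf{i}=(i_1,\dots,i_{\bar m})\in R(w_0^{(m+1)})$ and $s\in\{0,\dots,\bar m\}$, with $\mathbf{i}^-(s)=(i_1,\dots,i_{\bar m-s})$ and $\mathbf{i}^+(s)=(i_{\bar m-s+1},\dots,i_{\bar m})$, set $E_{\mathsf D}(s)(\mathbf{i})=(\mathbf{i}^-(s),m+1,m,\dots,1,\mathbf{i}^+(s)+1)$ and $E_{\mathsf A}(s)(\mathbf{i})=(\mathbf{i}^-(s)+1,1,2,\dots,m+1,\mathbf{i}^+(s))$,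 elements of $R(w_0^{(m+2)})$. For $\delta\in\{\mathsf A,\mathsf D\}^n$ and $I=(I_1,\dots,I_n)$ with $0\le I_j\le j(j-1)/2$, define $\mathbf{i}_\delta(I)=(E_{\delta_n}(I_n)\circ\cdots\circ E_{\delta_2}(I_2)\circ E_{\delta_1}(I_1))(\emptyset)\in R(w_0^{(n+1)})$. *)

theory Defs
  imports Main
begin

text \<open>Words are lists of positive naturals (letters in [m]).
  The type of extension labels A / D.\<close>
datatype ext_type = ExtA | ExtD

text \<open>E_D(s) and E_A(s) applied to a word i in R(w_0^{(m+1)}) (of length m(m+1)/2);
  i^-(s) is the first (length - s) letters, i^+(s) the last s letters.\<close>
definition ext_D :: "nat \<Rightarrow> nat \<Rightarrow> nat list \<Rightarrow> nat list" where
  "ext_D m s w = take (length w - s) w @ rev [1..<m+2] @ map Suc (drop (length w - s) w)"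

definition ext_A :: "nat \<Rightarrow> nat \<Rightarrow> nat list \<Rightarrow> nat list" where
  "ext_A m s w = map Suc (take (length w - s) w) @ [1..<m+2] @ drop (length w - s) w"

definition ext :: "ext_type \<Rightarrow> nat \<Rightarrow> nat \<Rightarrow> nat list \<Rightarrow> nat list" where
  "ext d m s w = (case d of ExtA \<Rightarrow> ext_A m s w | ExtD \<Rightarrow> ext_D m s w)"

text \<open>iw_aux j ds Is w applies E_{d_j}(I_j), E_{d_{j+1}}(I_{j+1}), ...; at step j the
  current word lies in R(w_0^{(j)}), so the extension uses m = j - 1.\<close>
fun iw_aux :: "nat \<Rightarrow> ext_type list \<Rightarrow> nat list \<Rightarrow> nat list \<Rightarrow> nat list" where
  "iw_aux j (d # ds) (s # ss) w = iw_aux (Suc j) ds ss (ext d (j - 1) s w)"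
| "iw_aux j _ _ w = w"

definition i_word :: "ext_type list \<Rightarrow> nat list \<Rightarrow> nat list" where
  "i_word ds Is = iw_aux 1 ds Is []"

definition two_move :: "nat list \<Rightarrow> nat list \<Rightarrow> bool" where
  "two_move u v \<longleftrightarrow> (\<exists>xs ys a b. (a > b + 1 \<or> b > a + 1) \<and>
      u = xs @ [a, b] @ ys \<and> v = xs @ [b, a] @ ys)"

definition two_move_equiv :: "nat list \<Rightarrow> nat list \<Rightarrow> bool" where
  "two_move_equiv u v \<longleftrightarrow> two_move\<^sup>*\<^sup>* u v"

end

theory Submission
  imports Defs
begin

lemma tm_ctx: "two_move u v \<Longrightarrow> two_move (a @ u @ b) (a @ v @ b)"
  unfolding two_move_def
  by (metis append.assoc)

lemma tme_ctx: "two_move\<^sup>*\<^sup>* u v \<Longrightarrow> two_move\<^sup>*\<^sup>* (a @ u @ b) (a @ v @ b)"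
  by (induction rule: rtranclp_induct) (auto intro: rtranclp.rtrancl_into_rtrancl tm_ctx)

lemma comm1: "(\<forall>b\<in>set v. a > b + 1 \<or> b > a + 1) \<Longrightarrow> two_move\<^sup>*\<^sup>* ([a] @ v) (v @ [a])"
proof (induction v)
  case Nil then show ?case by simp
next
  case (Cons b v)
  have "two_move ([a] @ (b # v)) ([b] @ [a] @ v)"
    unfolding two_move_def using Cons.prems by (rule_tac x="[]" in exI) auto
  moreover have "two_move\<^sup>*\<^sup>* ([b] @ ([a] @ v) @ []) ([b] @ (v @ [a]) @ [])"
    using Cons by (intro tme_ctx) auto
  ultimately show ?case by simp
qed

lemma comm: "(\<forall>a\<in>set u. \<forall>b\<in>set v. a > b + 1 \<or> b > a + 1) \<Longrightarrow> two_move\<^sup>*\<^sup>* (u @ v) (v @ u)"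
proof (induction u)
  case Nil then show ?case by simp
next
  case (Cons a u)
  have "two_move\<^sup>*\<^sup>* ([a] @ (u @ v) @ []) ([a] @ (v @ u) @ [])"
    using Cons by (intro tme_ctx) auto
  moreover have "two_move\<^sup>*\<^sup>* ([] @ ([a] @ v) @ u) ([] @ (v @ [a]) @ u)"
    using Cons by (intro tme_ctx comm1) auto
  ultimately show ?case by simp
qed

lemma iw_app: "length ds = length ss \<Longrightarrow>
  iw_aux j (ds @ ds') (ss @ ss') w = iw_aux (j + length ds) ds' ss' (iw_aux j ds ss w)"
proof (induction ds arbitrary: ss j w)
  case Nil then show ?case by simp
next
  case (Cons d ds)
  then obtain s ss0 where "ss = s # ss0" by (cases ss) auto
  with Cons show ?case by simp
qed

theorem lemma5p5:
  fixes n k :: nat and ds :: "ext_type list"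
  assumes "n \<ge> 2" and "1 \<le> k" and "k \<le> n - 1" and "length ds = n - 2"
  shows "two_move_equiv
           (i_word (ds @ [ExtA, ExtD]) (replicate (n - 1) 0 @ [k]))
           (i_word (ds @ [ExtD, ExtA]) (replicate (n - 1) 0 @ [n - k - 1]))"
proof -
  define W where "W = iw_aux 1 ds (replicate (n - 2) 0) []"
  define p where "p = n - 1 - k"
  have nrep: "replicate (n - 1) (0::nat) @ [s] = replicate (n - 2) 0 @ [0, s]" for s
    using assms(1) by (metis One_nat_def Suc_diff_le diff_Suc_Suc numeral_2_eq_2 replicate_Suc replicate_append_same append_Cons append.assoc append_Nil)
  have L: "i_word (ds @ [ExtA, ExtD]) (replicate (n - 1) 0 @ [k])
     = ext_D (n - 1) k (map Suc W @ [1..<n])"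
  proof -
    obtain m where m: "n = m + 2" using assms(1) by (metis le_add_diff_inverse2)
    have "length ds = length (replicate (n - 2) (0::nat))" using assms by simp
    then show ?thesis unfolding i_word_def nrep W_def
      by (simp add: iw_app ext_def ext_A_def m)
  qed
  have R: "i_word (ds @ [ExtD, ExtA]) (replicate (n - 1) 0 @ [n - k - 1])
     = ext_A (n - 1) (n - k - 1) (W @ rev [1..<n])"
  proof -
    obtain m where m: "n = m + 2" using assms(1) by (metis le_add_diff_inverse2)
    have "length ds = length (replicate (n - 2) (0::nat))" using assms by simp
    then show ?thesis unfolding i_word_def nrep W_def
      by (simp add: iw_app ext_def ext_D_def m)
  qed
  have n: "n = p + k + 1" using assms unfolding p_def by simp
  have u1: "[1..<n+1] = [1..<p+1] @ [p+1] @ [p+2..<n+1]"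
    using n upt_add_eq_append[of 1 "p+1" "k+1"] upt_conv_Cons[of "p+1" "n+1"] by simp
  have u2: "[1..<n] = [1..<p+1] @ [p+1..<n]"
    using n upt_add_eq_append[of 1 "p+1" "k"] by simp
  have lk: "length [p+1..<n] = k" using n by simp
  have dk: "drop k (rev [1..<n]) = rev [1..<p+1]"
    by (subst u2) (simp only: rev_append drop_append lk drop_all order_refl diff_self_eq_0 drop_0 append_Nil length_rev)
  have L2: "ext_D (n - 1) k (map Suc W @ [1..<n]) = map Suc W @ ([1..<p+1] @ (rev [p+2..<n+1] @ [p+1] @ rev [1..<p+1]) @ [p+2..<n+1])"
  proof -
    have "n - 1 + 2 = n + 1" using n by simp
    moreover have "length (map Suc W @ [1..<n]) - k = length W + p" using n assms(2) by simp
    ultimately show ?thesis unfolding ext_D_def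
      apply (simp only:)
      apply (subst u2, subst u1)
      using n by (simp add: map_Suc_upt)
  qed
  have R2: "ext_A (n - 1) (n - k - 1) (W @ rev [1..<n]) = map Suc W @ (rev [p+2..<n+1] @ ([1..<p+1] @ [p+1] @ [p+2..<n+1]) @ rev [1..<p+1])"
  proof -
    have "n - 1 + 2 = n + 1" using n by simp
    moreover have "length (W @ rev [1..<n]) - (n - k - 1) = length W + k" using n assms(2) by simp
    moreover have "n - k - 1 = p" using n by simp
    ultimately show ?thesis unfolding ext_A_def
      apply (simp only:)
      apply (subst u2, subst u1)
      using lk dk by (simp add: u2 map_Suc_upt rev_map[symmetric] del: upt_Suc)
  qed
  have c1: "two_move\<^sup>*\<^sup>* ([1..<p+1] @ rev [p+2..<n+1]) (rev [p+2..<n+1] @ [1..<p+1])"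
    by (rule comm) auto
  have c2: "two_move\<^sup>*\<^sup>* (rev [1..<p+1] @ [p+2..<n+1]) ([p+2..<n+1] @ rev [1..<p+1])"
    by (rule comm) auto
  have s1: "two_move\<^sup>*\<^sup>* (map Suc W @ ([1..<p+1] @ (rev [p+2..<n+1] @ [p+1] @ rev [1..<p+1]) @ [p+2..<n+1]))
     (map Suc W @ (rev [p+2..<n+1] @ [1..<p+1] @ [p+1] @ rev [1..<p+1] @ [p+2..<n+1]))"
    using tme_ctx[OF c1, of "map Suc W" "[p+1] @ rev [1..<p+1] @ [p+2..<n+1]"] by simp
  have s2: "two_move\<^sup>*\<^sup>* (map Suc W @ (rev [p+2..<n+1] @ [1..<p+1] @ [p+1] @ rev [1..<p+1] @ [p+2..<n+1]))
     (map Suc W @ (rev [p+2..<n+1] @ ([1..<p+1] @ [p+1] @ [p+2..<n+1]) @ rev [1..<p+1]))"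
    using tme_ctx[OF c2, of "map Suc W @ rev [p+2..<n+1] @ [1..<p+1] @ [p+1]" "[]"] by simp
  show ?thesis unfolding two_move_equiv_def L R L2 R2 using s1 s2 by (rule rtranclp_trans)
qed

end
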